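(* Let $\mathcal{Z}=\{(S_q,\gamma_q)\}_{q\in[Q]}$ be a buyer-optimal signaling scheme for $\mathcal{D}$, and let $p$ be a price maximizing $p\cdot G_{\mathcal{D}}(p)$. Then for every $q$ with $\gamma_q>0$, the price $p$ also maximizes $p'\cdot G_{S_q}(p')$ over $p'\ge 0$.
   Context: Values and prior. $0<v_1<\dots<v_n$ are reals, and $\mathcal{D}$ is a distribution on $\{v_1,\dots,v_n\}$ with $f_{\mathcal{D}}(v_i)>0$. For a distribution $S$, $G_S(p)=\Pr_{v\sim S}[v\ge p]$. Signals and pricing. A signal is a distribution $S$ on these values. The seller posts $p^*_S$, the smallest $v$ in the support of $S$ maximizing $v\,G_S(v)$. The surplus of value $v$ is $cs_v(S)=\mathbb{1}[v\ge p^*_S](v-p^*_S)$. Signaling schemes. A signaling scheme is $\mathcal{Z}=\{(S_q,\gamma_q)\}$ with $\gamma_q\ge0$, $\sum\gamma_q=1$ and $\sum_q\gamma_q f_{S_q}=f_{\mathcal{D}}$. Its expected consumer surplus at $v_i$ is $cs_{v_i}(\mathcal{Z})=\sum_q cs_{v_i}(S_q)\gamma_q f_{S_q}(v_i)/f_{\mathcal{D}}(v_i)$. $\mathcal{Z}$ is buyer-optimal if \[\sum_i f_{\mathcal{D}}(v_i)\,cs_{v_i}(\mathcal{Z})=\sum_i f_{\mathcal{D}}(v_i)\,v_i-\max_p p\,G_{\mathcal{D}}(p).\] *)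

theory Defs
  imports Complex_Main
begin

definition is_dist :: "real set \<Rightarrow> (real \<Rightarrow> real) \<Rightarrow> bool" where
  "is_dist V f \<longleftrightarrow> (\<forall>x\<in>V. f x \<ge> 0) \<and> (\<forall>x. x \<notin> V \<longrightarrow> f x = 0) \<and> (\<Sum>x\<in>V. f x) = 1"

definition G :: "real set \<Rightarrow> (real \<Rightarrow> real) \<Rightarrow> real \<Rightarrow> real" where
  "G V f p = (\<Sum>x\<in>{x\<in>V. x \<ge> p}. f x)"

definition supp :: "real set \<Rightarrow> (real \<Rightarrow> real) \<Rightarrow> real set" where
  "supp V f = {x\<in>V. f x > 0}"

definition post_price :: "real set \<Rightarrow> (real \<Rightarrow> real) \<Rightarrow> real" where
  "post_price V f = Min {v\<in>supp V f. \<forall>w\<in>supp V f. w * G V f w \<le> v * G V f v}"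

definition cs :: "real set \<Rightarrow> (real \<Rightarrow> real) \<Rightarrow> real \<Rightarrow> real" where
  "cs V f v = (if v \<ge> post_price V f then v - post_price V f else 0)"

definition is_scheme :: "real set \<Rightarrow> (real \<Rightarrow> real) \<Rightarrow> nat \<Rightarrow> (nat \<Rightarrow> real \<Rightarrow> real) \<Rightarrow> (nat \<Rightarrow> real) \<Rightarrow> bool" where
  "is_scheme V fD Q S \<gamma> \<longleftrightarrow>
     (\<forall>q<Q. is_dist V (S q) \<and> \<gamma> q \<ge> 0) \<and> (\<Sum>q<Q. \<gamma> q) = 1 \<and>
     (\<forall>x\<in>V. (\<Sum>q<Q. \<gamma> q * S q x) = fD x)"

definition cs_scheme :: "real set \<Rightarrow> (real \<Rightarrow> real) \<Rightarrow> nat \<Rightarrow> (nat \<Rightarrow> real \<Rightarrow> real) \<Rightarrow> (nat \<Rightarrow> real) \<Rightarrow> real \<Rightarrow> real" where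
  "cs_scheme V fD Q S \<gamma> v = (\<Sum>q<Q. cs V (S q) v * \<gamma> q * S q v / fD v)"

definition buyer_optimal :: "real set \<Rightarrow> (real \<Rightarrow> real) \<Rightarrow> nat \<Rightarrow> (nat \<Rightarrow> real \<Rightarrow> real) \<Rightarrow> (nat \<Rightarrow> real) \<Rightarrow> bool" where
  "buyer_optimal V fD Q S \<gamma> \<longleftrightarrow> is_scheme V fD Q S \<gamma> \<and>
     (\<Sum>v\<in>V. fD v * cs_scheme V fD Q S \<gamma> v) =
       (\<Sum>v\<in>V. fD v * v) - (SUP p\<in>{0..}. p * G V fD p)"

end

theory Submission
  imports Defs
begin

lemma G_nonneg:
  assumes "is_dist V f" shows "G V f p \<ge> 0"
  using assms unfolding G_def is_dist_def by (auto intro: sum_nonneg)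

lemma pp_props:
  assumes fin: "finite V" and pos: "\<forall>v\<in>V. v > 0" and d: "is_dist V f"
  shows "post_price V f \<in> supp V f"
    and "\<forall>w\<in>supp V f. w * G V f w \<le> post_price V f * G V f (post_price V f)"
proof -
  let ?S = "supp V f"
  have fS: "finite ?S" using fin unfolding supp_def by auto
  have neS: "?S \<noteq> {}"
  proof
    assume "?S = {}"
    then have "\<forall>x\<in>V. f x = 0" using d unfolding supp_def is_dist_def by force
    then have "(\<Sum>x\<in>V. f x) = 0" by simp
    then show False using d unfolding is_dist_def by simp
  qed
  let ?h = "\<lambda>v. v * G V f v"
  have "Max (?h ` ?S) \<in> ?h ` ?S" using Max_in[of "?h ` ?S"] fS neS by blast
  then obtain m where m1: "Max (?h ` ?S) = ?h m" and m2: "m \<in> ?S" by (rule imageE)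
  note m = m2 m1[symmetric]
  have mM: "m \<in> {v\<in>?S. \<forall>w\<in>?S. ?h w \<le> ?h v}"
    using m fS by auto
  have fM: "finite {v\<in>?S. \<forall>w\<in>?S. ?h w \<le> ?h v}" using fS by auto
  have "post_price V f \<in> {v\<in>?S. \<forall>w\<in>?S. ?h w \<le> ?h v}"
    unfolding post_price_def using Min_in[OF fM] mM by blast
  then show "post_price V f \<in> ?S" "\<forall>w\<in>?S. ?h w \<le> ?h (post_price V f)" by auto
qed

lemma key1:
  assumes fin: "finite V" and pos: "\<forall>v\<in>V. v > 0" and d: "is_dist V f"
  shows "\<forall>p'\<ge>0. p' * G V f p' \<le> post_price V f * G V f (post_price V f)"
proof (intro allI impI)
  fix p' :: real assume p0: "p' \<ge> 0"
  let ?P = "post_price V f"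
  have Pin: "?P \<in> supp V f" and Pmax: "\<forall>w\<in>supp V f. w * G V f w \<le> ?P * G V f ?P"
    using pp_props[OF fin pos d] by auto
  have Ppos: "?P > 0" using Pin pos unfolding supp_def by auto
  have PG: "?P * G V f ?P \<ge> 0" using Ppos G_nonneg[OF d] by simp
  let ?A = "{x\<in>supp V f. x \<ge> p'}"
  show "p' * G V f p' \<le> ?P * G V f ?P"
  proof (cases "?A = {}")
    case True
    have "G V f p' = 0" unfolding G_def
    proof (rule sum.neutral, intro ballI)
      fix x assume "x \<in> {x\<in>V. x \<ge> p'}"
      then show "f x = 0" using True d unfolding supp_def is_dist_def by force
    qed
    then show ?thesis using PG by simp
  next
    case False
    have fA: "finite ?A" using fin unfolding supp_def by auto
    define w where "w = Min ?A"
    have wA: "w \<in> ?A" using Min_in[OF fA False] w_def by simp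
    have wmin: "\<And>x. x \<in> ?A \<Longrightarrow> w \<le> x" using Min_le[OF fA] w_def by simp
    have "G V f p' = G V f w" unfolding G_def
    proof (rule sum.mono_neutral_right)
      show "finite {x \<in> V. p' \<le> x}" using fin by auto
      show "{x \<in> V. w \<le> x} \<subseteq> {x \<in> V. p' \<le> x}" using wA by auto
      show "\<forall>i\<in>{x \<in> V. p' \<le> x} - {x \<in> V. w \<le> x}. f i = 0"
      proof
        fix i assume i: "i \<in> {x \<in> V. p' \<le> x} - {x \<in> V. w \<le> x}"
        have "i \<notin> supp V f" using i wmin by force
        then show "f i = 0" using i d unfolding supp_def is_dist_def by force
      qed
    qed
    then have "p' * G V f p' \<le> w * G V f w"
      using wA G_nonneg[OF d, of w] by (simp add: mult_right_mono)
    also have "\<dots> \<le> ?P * G V f ?P" using Pmax wA by auto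
    finally show ?thesis .
  qed
qed

lemma key2:
  assumes fin: "finite V" and pos: "\<forall>v\<in>V. v > 0" and d: "is_dist V f"
  shows "(\<Sum>v\<in>V. f v * cs V f v) \<le> (\<Sum>v\<in>V. f v * v) - post_price V f * G V f (post_price V f)"
proof -
  let ?P = "post_price V f"
  have "G V f ?P = (\<Sum>v\<in>V. if v \<ge> ?P then f v else 0)"
    unfolding G_def using fin by (simp add: sum.inter_filter)
  then have eq: "(\<Sum>v\<in>V. f v * v) - ?P * G V f ?P = (\<Sum>v\<in>V. f v * v - ?P * (if v \<ge> ?P then f v else 0))"
    by (simp add: sum_subtractf sum_distrib_left)
  have "(\<Sum>v\<in>V. f v * cs V f v) \<le> (\<Sum>v\<in>V. f v * v - ?P * (if v \<ge> ?P then f v else 0))"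
  proof (rule sum_mono)
    fix v assume v: "v \<in> V"
    have "f v \<ge> 0" "v > 0" using v d pos unfolding is_dist_def by auto
    then show "f v * cs V f v \<le> f v * v - ?P * (if v \<ge> ?P then f v else 0)"
      unfolding cs_def by (auto simp: algebra_simps)
  qed
  then show ?thesis using eq by simp
qed

theorem lemma8:
  fixes V :: "real set" and fD :: "real \<Rightarrow> real" and Q :: nat
    and S :: "nat \<Rightarrow> real \<Rightarrow> real" and \<gamma> :: "nat \<Rightarrow> real" and p :: real
  assumes "finite V" and "V \<noteq> {}" and "\<forall>v\<in>V. v > 0"
    and "is_dist V fD" and "\<forall>v\<in>V. fD v > 0"
    and "buyer_optimal V fD Q S \<gamma>"
    and "p \<ge> 0" and "\<forall>p'\<ge>0. p' * G V fD p' \<le> p * G V fD p"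
    and "q < Q" and "\<gamma> q > 0"
  shows "\<forall>p'\<ge>0. p' * G V (S q) p' \<le> p * G V (S q) p"
proof -
  note fin = assms(1) and pos = assms(3) and fDpos = assms(5)
  have sch: "is_scheme V fD Q S \<gamma>" and bo: "(\<Sum>v\<in>V. fD v * cs_scheme V fD Q S \<gamma> v) =
       (\<Sum>v\<in>V. fD v * v) - (SUP p\<in>{0..}. p * G V fD p)"
    using assms(6) unfolding buyer_optimal_def by auto
  have dq: "\<And>r. r < Q \<Longrightarrow> is_dist V (S r)" and gq: "\<And>r. r < Q \<Longrightarrow> \<gamma> r \<ge> 0"
    and mix: "\<And>x. x \<in> V \<Longrightarrow> (\<Sum>r<Q. \<gamma> r * S r x) = fD x"
    using sch unfolding is_scheme_def by auto
  have SUP: "(SUP p\<in>{0..}. p * G V fD p) = p * G V fD p"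
    by (rule cSup_eq_maximum) (use assms(7,8) in auto)
  define R where "R r = post_price V (S r) * G V (S r) (post_price V (S r))" for r
  define d where "d r = ((\<Sum>v\<in>V. S r v * v) - p * G V (S r) p) - (\<Sum>v\<in>V. S r v * cs V (S r) v)" for r
  have dnn: "\<And>r. r < Q \<Longrightarrow> d r \<ge> 0"
  proof -
    fix r assume r: "r < Q"
    have "p * G V (S r) p \<le> R r" using key1[OF fin pos dq[OF r]] assms(7) unfolding R_def by auto
    moreover have "(\<Sum>v\<in>V. S r v * cs V (S r) v) \<le> (\<Sum>v\<in>V. S r v * v) - R r"
      using key2[OF fin pos dq[OF r]] unfolding R_def by simp
    ultimately show "d r \<ge> 0" unfolding d_def by simp
  qed
  have e1: "(\<Sum>v\<in>V. fD v * cs_scheme V fD Q S \<gamma> v) = (\<Sum>r<Q. \<gamma> r * (\<Sum>v\<in>V. S r v * cs V (S r) v))"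
  proof -
    have "(\<Sum>v\<in>V. fD v * cs_scheme V fD Q S \<gamma> v) = (\<Sum>v\<in>V. \<Sum>r<Q. \<gamma> r * (S r v * cs V (S r) v))"
    proof (rule sum.cong[OF refl])
      fix v assume v: "v \<in> V"
      have "fD v \<noteq> 0" using fDpos v by auto
      then show "fD v * cs_scheme V fD Q S \<gamma> v = (\<Sum>r<Q. \<gamma> r * (S r v * cs V (S r) v))"
        proof -
        have "fD v * cs_scheme V fD Q S \<gamma> v = (\<Sum>r<Q. fD v * (cs V (S r) v * \<gamma> r * S r v / fD v))"
          unfolding cs_scheme_def by (rule sum_distrib_left)
        also have "\<dots> = (\<Sum>r<Q. \<gamma> r * (S r v * cs V (S r) v))"
          by (rule sum.cong[OF refl]) (use \<open>fD v \<noteq> 0\<close> in \<open>simp add: field_simps\<close>)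
        finally show ?thesis .
      qed
    qed
    also have "\<dots> = (\<Sum>r<Q. \<gamma> r * (\<Sum>v\<in>V. S r v * cs V (S r) v))"
      by (subst sum.swap) (simp add: sum_distrib_left)
    finally show ?thesis .
  qed
  have e2: "(\<Sum>v\<in>V. fD v * v) = (\<Sum>r<Q. \<gamma> r * (\<Sum>v\<in>V. S r v * v))"
  proof -
    have "(\<Sum>v\<in>V. fD v * v) = (\<Sum>v\<in>V. \<Sum>r<Q. \<gamma> r * (S r v * v))"
      by (rule sum.cong[OF refl]) (simp add: mix[symmetric] sum_distrib_right mult.assoc)
    also have "\<dots> = (\<Sum>r<Q. \<gamma> r * (\<Sum>v\<in>V. S r v * v))"
      by (subst sum.swap) (simp add: sum_distrib_left)
    finally show ?thesis .
  qed
  have e3: "G V fD p = (\<Sum>r<Q. \<gamma> r * G V (S r) p)"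
  proof -
    have "G V fD p = (\<Sum>x\<in>{x\<in>V. x \<ge> p}. \<Sum>r<Q. \<gamma> r * S r x)"
      unfolding G_def by (rule sum.cong[OF refl]) (simp add: mix)
    also have "\<dots> = (\<Sum>r<Q. \<gamma> r * G V (S r) p)"
      unfolding G_def by (subst sum.swap) (simp add: sum_distrib_left)
    finally show ?thesis .
  qed
  have "(\<Sum>r<Q. \<gamma> r * d r) = 0"
  proof -
    have "(\<Sum>r<Q. \<gamma> r * d r) = (\<Sum>r<Q. \<gamma> r * (\<Sum>v\<in>V. S r v * v)) - p * (\<Sum>r<Q. \<gamma> r * G V (S r) p)
        - (\<Sum>r<Q. \<gamma> r * (\<Sum>v\<in>V. S r v * cs V (S r) v))"
    proof -
      have "(\<Sum>r<Q. \<gamma> r * d r) = (\<Sum>r<Q. \<gamma> r * (\<Sum>v\<in>V. S r v * v) - p * (\<gamma> r * G V (S r) p)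
          - \<gamma> r * (\<Sum>v\<in>V. S r v * cs V (S r) v))"
        unfolding d_def by (rule sum.cong[OF refl]) (simp only: right_diff_distrib mult.left_commute)
      also have "\<dots> = (\<Sum>r<Q. \<gamma> r * (\<Sum>v\<in>V. S r v * v)) - (\<Sum>r<Q. p * (\<gamma> r * G V (S r) p))
        - (\<Sum>r<Q. \<gamma> r * (\<Sum>v\<in>V. S r v * cs V (S r) v))"
        by (simp only: sum_subtractf)
      finally show ?thesis by (simp only: sum_distrib_left)
    qed
    then show ?thesis using e1 e2 e3 bo SUP by simp
  qed
  moreover have "\<forall>r\<in>{..<Q}. 0 \<le> \<gamma> r * d r" using dnn gq by auto
  ultimately have "\<gamma> q * d q = 0" using sum_nonneg_eq_0_iff[of "{..<Q}" "\<lambda>r. \<gamma> r * d r"] assms(9) by simp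
  then have d0: "d q = 0" using assms(10) by simp
  have "(\<Sum>v\<in>V. S q v * cs V (S q) v) \<le> (\<Sum>v\<in>V. S q v * v) - R q"
    using key2[OF fin pos dq[OF assms(9)]] unfolding R_def by simp
  then have "R q \<le> p * G V (S q) p" using d0 unfolding d_def by simp
  then show ?thesis using key1[OF fin pos dq[OF assms(9)]] unfolding R_def by fastforce
qed

end
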